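(* Let $P$ be a finite poset and $\mathcal{J}\subseteq\mathrm{Hom}(P,\mathbb{N})$ a poset ideal. The set of minimal markers for $\mathcal{J}$ is finite.
   Context: $\mathbb{N}=\{0,1,2,\dots\}$; $\mathrm{Hom}(P,\mathbb{N})$ is the set of isotone maps $P\to\mathbb{N}$ ordered pointwise; a poset ideal is a down-closed subset. A marker for $\mathcal{J}$ is a pair of a poset ideal $I\subseteq P$ and an isotone map $\alpha:I\to\mathbb{N}$ such that every isotone $\phi:P\to\mathbb{N}$ with $\phi|_I=\alpha$ belongs to $\mathcal{J}$. It is a minimal marker if for no poset ideal $I'\subsetneq I$ is the restriction $\alpha|_{I'}$ a marker for $\mathcal{J}$. *)

theory Defs
  imports Main
begin

text \<open>A finite poset is modelled as a finite subset P of a type with a partial order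
  (the induced order). Maps P \<rightarrow> nat (resp. I \<rightarrow> nat) are represented as total functions
  that are 0 outside their domain, so that pointwise order and equality are the intended ones.\<close>

definition restr :: "'a set \<Rightarrow> ('a \<Rightarrow> nat) \<Rightarrow> 'a \<Rightarrow> nat" where
  "restr I f = (\<lambda>x. if x \<in> I then f x else 0)"

definition isotone_on :: "'a::order set \<Rightarrow> ('a \<Rightarrow> nat) \<Rightarrow> bool" where
  "isotone_on S f \<longleftrightarrow> (\<forall>x\<in>S. \<forall>y\<in>S. x \<le> y \<longrightarrow> f x \<le> f y)"

definition Hom :: "'a::order set \<Rightarrow> ('a \<Rightarrow> nat) set" where
  "Hom S = {f. isotone_on S f \<and> (\<forall>x. x \<notin> S \<longrightarrow> f x = 0)}"

definition poset_ideal :: "'a::order set \<Rightarrow> 'a set \<Rightarrow> bool" where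
  "poset_ideal P I \<longleftrightarrow> I \<subseteq> P \<and> (\<forall>x\<in>I. \<forall>y\<in>P. y \<le> x \<longrightarrow> y \<in> I)"

definition hom_ideal :: "'a::order set \<Rightarrow> ('a \<Rightarrow> nat) set \<Rightarrow> bool" where
  "hom_ideal P J \<longleftrightarrow> J \<subseteq> Hom P \<and> (\<forall>\<phi>\<in>J. \<forall>\<psi>\<in>Hom P. \<psi> \<le> \<phi> \<longrightarrow> \<psi> \<in> J)"

definition marker :: "'a::order set \<Rightarrow> ('a \<Rightarrow> nat) set \<Rightarrow> 'a set \<Rightarrow> ('a \<Rightarrow> nat) \<Rightarrow> bool" where
  "marker P J I \<alpha> \<longleftrightarrow> poset_ideal P I \<and> \<alpha> \<in> Hom I \<and>
     (\<forall>\<phi>\<in>Hom P. restr I \<phi> = \<alpha> \<longrightarrow> \<phi> \<in> J)"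

definition minimal_marker :: "'a::order set \<Rightarrow> ('a \<Rightarrow> nat) set \<Rightarrow> 'a set \<Rightarrow> ('a \<Rightarrow> nat) \<Rightarrow> bool" where
  "minimal_marker P J I \<alpha> \<longleftrightarrow> marker P J I \<alpha> \<and>
     (\<forall>I'. poset_ideal P I' \<and> I' \<subset> I \<longrightarrow> \<not> marker P J I' (restr I' \<alpha>))"

end

theory Submission
  imports Defs "HOL-Library.Infinite_Set"
begin

lemma seq1:
  fixes h :: "nat \<Rightarrow> nat"
  assumes "infinite S"
  shows "\<exists>S'\<subseteq>S. infinite S' \<and> (\<forall>i\<in>S'. \<forall>j\<in>S'. i < j \<longrightarrow> h i \<le> h j)"
proof (cases "finite {i\<in>S. \<forall>j\<in>S. i < j \<longrightarrow> h i \<le> h j}")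
  case False
  then show ?thesis by (intro exI[of _ "{i\<in>S. \<forall>j\<in>S. i < j \<longrightarrow> h i \<le> h j}"]) auto
next
  case True
  then obtain N where N: "{i\<in>S. \<forall>j\<in>S. i < j \<longrightarrow> h i \<le> h j} \<subseteq> {..<N}"
    using finite_nat_bounded by blast
  have "infinite {i\<in>S. N \<le> i}"
  proof
    assume "finite {i\<in>S. N \<le> i}"
    then have "finite ({i\<in>S. N \<le> i} \<union> {..<N})" by simp
    moreover have "S \<subseteq> {i\<in>S. N \<le> i} \<union> {..<N}" by auto
    ultimately show False using assms finite_subset by blast
  qed
  then obtain k where "k \<in> {i\<in>S. N \<le> i}" using infinite_imp_nonempty by blast
  then obtain i0 where i0: "i0 \<in> {i\<in>S. N \<le> i}" and mn: "\<forall>y. y \<in> {i\<in>S. N \<le> i} \<longrightarrow> h i0 \<le> h y"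
    using ex_has_least_nat[of "\<lambda>i. i \<in> {i\<in>S. N \<le> i}" k h] by blast
  have "i0 \<notin> {i\<in>S. \<forall>j\<in>S. i < j \<longrightarrow> h i \<le> h j}" using N i0 by auto
  then obtain j where "j \<in> S" "i0 < j" "h j < h i0" using i0 by auto
  then have "j \<in> {i\<in>S. N \<le> i}" using i0 by auto
  then have "h i0 \<le> h j" using mn by blast
  then show ?thesis using \<open>h j < h i0\<close> by simp
qed

lemma seqP:
  fixes f :: "nat \<Rightarrow> 'a \<Rightarrow> nat"
  assumes "finite P"
  shows "infinite S \<Longrightarrow> \<exists>S'\<subseteq>S. infinite S' \<and> (\<forall>i\<in>S'. \<forall>j\<in>S'. i < j \<longrightarrow> (\<forall>x\<in>P. f i x \<le> f j x))"
  using assms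
proof (induction P arbitrary: S rule: finite_induct)
  case empty
  then show ?case by blast
next
  case (insert a Q)
  then obtain S1 where S1: "S1 \<subseteq> S" "infinite S1"
    "\<forall>i\<in>S1. \<forall>j\<in>S1. i < j \<longrightarrow> (\<forall>x\<in>Q. f i x \<le> f j x)" by blast
  obtain S2 where S2: "S2 \<subseteq> S1" "infinite S2" "\<forall>i\<in>S2. \<forall>j\<in>S2. i < j \<longrightarrow> f i a \<le> f j a"
    using seq1[OF S1(2), of "\<lambda>i. f i a"] by blast
  show ?case using S1 S2 by (intro exI[of _ S2]) blast
qed

lemma dickson:
  fixes U :: "('a \<Rightarrow> nat) set"
  assumes "finite P" and U: "\<And>u x. u \<in> U \<Longrightarrow> x \<notin> P \<Longrightarrow> u x = 0"
  shows "finite {g\<in>U. \<forall>h\<in>U. h \<le> g \<longrightarrow> h = g}"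
proof (rule ccontr)
  let ?M = "{g\<in>U. \<forall>h\<in>U. h \<le> g \<longrightarrow> h = g}"
  assume "infinite ?M"
  then obtain g :: "nat \<Rightarrow> _" where g: "inj g" "range g \<subseteq> ?M"
    using infinite_countable_subset by blast
  obtain S' where S': "infinite S'" "\<forall>i\<in>S'. \<forall>j\<in>S'. i < j \<longrightarrow> (\<forall>x\<in>P. g i x \<le> g j x)"
    using seqP[OF assms(1), of UNIV g] by auto
  obtain i where i: "i \<in> S'" using S'(1) using infinite_imp_nonempty by blast
  obtain j where j: "j \<in> S'" "i < j" using S'(1) unfolding infinite_nat_iff_unbounded by blast
  have gi: "g i \<in> U" and gj: "g j \<in> ?M" using g by auto
  have "g i \<le> g j"
  proof (rule le_funI)
    fix x show "g i x \<le> g j x"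
      using S'(2) i j U[OF gi, of x] by (cases "x \<in> P") auto
  qed
  then have "g i = g j" using gi gj by auto
  then show False using g(1) j(2) by (auto dest: injD)
qed

lemma minimal_below:
  fixes U :: "('a \<Rightarrow> nat) set"
  assumes "finite P" and U: "\<And>u x. u \<in> U \<Longrightarrow> x \<notin> P \<Longrightarrow> u x = 0" and "u \<in> U"
  shows "\<exists>m\<in>U. m \<le> u \<and> (\<forall>h\<in>U. h \<le> m \<longrightarrow> h = m)"
proof -
  obtain m where m: "m \<in> U \<and> m \<le> u" and mn: "\<forall>y. y \<in> U \<and> y \<le> u \<longrightarrow> (\<Sum>x\<in>P. m x) \<le> (\<Sum>x\<in>P. y x)"
    using ex_has_least_nat[of "\<lambda>v. v \<in> U \<and> v \<le> u" u "\<lambda>v. \<Sum>x\<in>P. v x"] assms(3) by blast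
  have "\<forall>h\<in>U. h \<le> m \<longrightarrow> h = m"
  proof (intro ballI impI)
    fix h assume h: "h \<in> U" "h \<le> m"
    show "h = m"
    proof (rule ccontr)
      assume "h \<noteq> m"
      then obtain x where x: "h x \<noteq> m x" by auto
      have xP: "x \<in> P"
      proof (rule ccontr)
        assume "x \<notin> P"
        then have "h x = 0" "m x = 0" using U h(1) m by blast+
        then show False using x by simp
      qed
      have "h x < m x" using x h(2) le_funD[OF h(2), of x] by simp
      then have "(\<Sum>x\<in>P. h x) < (\<Sum>x\<in>P. m x)"
        using sum_strict_mono_ex1[OF assms(1), of h m] xP h(2) by (auto simp: le_fun_def)
      moreover have "h \<le> u" using h(2) m by auto
      ultimately show False using mn h(1) by fastforce
    qed
  qed
  then show ?thesis using m by blast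
qed

theorem proposition1p8:
  fixes P :: "'a::order set" and J :: "('a \<Rightarrow> nat) set"
  assumes "finite P" and "hom_ideal P J"
  shows "finite {(I, \<alpha>). minimal_marker P J I \<alpha>}"
proof -
  let ?U = "Hom P - J"
  have U0: "\<And>u x. u \<in> ?U \<Longrightarrow> x \<notin> P \<Longrightarrow> u x = 0" by (auto simp: Hom_def)
  let ?M = "{g\<in>?U. \<forall>h\<in>?U. h \<le> g \<longrightarrow> h = g}"
  have finM: "finite ?M" by (rule dickson[OF assms(1)]) (rule U0)
  define B where "B = Suc (\<Sum>g\<in>?M. \<Sum>x\<in>P. g x)"
  have Mb: "g x < B" if "g \<in> ?M" for g x
  proof (cases "x \<in> P")
    case True
    have "g x \<le> (\<Sum>x\<in>P. g x)" using True assms(1) by (intro member_le_sum) auto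
    also have "\<dots> \<le> (\<Sum>g\<in>?M. \<Sum>x\<in>P. g x)" using that finM by (intro member_le_sum) auto
    finally show ?thesis unfolding B_def by simp
  next
    case False then have "g x = 0" using U0 that by blast
    then show ?thesis unfolding B_def by simp
  qed
  have W: "\<exists>\<psi>\<in>Hom P. \<psi> \<notin> J \<and> \<psi> \<le> \<phi> \<and> (\<forall>x. \<psi> x < B)" if "\<phi> \<in> Hom P" "\<phi> \<notin> J" for \<phi>
  proof -
    have phiU: "\<phi> \<in> ?U" using that by simp
    have "\<exists>m\<in>?U. m \<le> \<phi> \<and> (\<forall>h\<in>?U. h \<le> m \<longrightarrow> h = m)"
      apply (rule minimal_below[OF assms(1)])
       apply (erule U0, assumption)
      apply (rule phiU)
      done
    then obtain m where "m \<in> ?U" "m \<le> \<phi>" "\<forall>h\<in>?U. h \<le> m \<longrightarrow> h = m"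
      by blast
    then show ?thesis using Mb[of m] by auto
  qed
  have HP: "isotone_on P \<psi>" "\<And>x. x \<notin> P \<Longrightarrow> \<psi> x = 0" if "\<psi> \<in> Hom P" for \<psi>
    using that by (auto simp: Hom_def)
  have J: "J \<subseteq> Hom P" "\<And>\<phi> \<psi>. \<phi> \<in> J \<Longrightarrow> \<psi> \<in> Hom P \<Longrightarrow> \<psi> \<le> \<phi> \<Longrightarrow> \<psi> \<in> J"
    using assms(2) by (auto simp: hom_ideal_def)
  have bound: "\<forall>x. \<alpha> x < B" if mm: "minimal_marker P J I \<alpha>" for I \<alpha>
  proof (rule ccontr)
    assume "\<not> (\<forall>x. \<alpha> x < B)"
    then obtain x0 where x0: "B \<le> \<alpha> x0" by (auto simp: not_less)
    have mk: "marker P J I \<alpha>" and mn: "\<And>I'. poset_ideal P I' \<Longrightarrow> I' \<subset> I \<Longrightarrow> \<not> marker P J I' (restr I' \<alpha>)"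
      using mm by (auto simp: minimal_marker_def)
    have PI: "I \<subseteq> P" "\<And>x y. x \<in> I \<Longrightarrow> y \<in> P \<Longrightarrow> y \<le> x \<Longrightarrow> y \<in> I"
      using mk by (auto simp: marker_def poset_ideal_def)
    have aI: "isotone_on I \<alpha>" "\<And>x. x \<notin> I \<Longrightarrow> \<alpha> x = 0"
      using mk by (auto simp: marker_def Hom_def)
    have ext: "\<And>\<phi>. \<phi> \<in> Hom P \<Longrightarrow> restr I \<phi> = \<alpha> \<Longrightarrow> \<phi> \<in> J"
      using mk by (auto simp: marker_def)
    define I' where "I' = {x\<in>I. \<alpha> x < B}"
    have x0I: "x0 \<in> I" using x0 aI(2) unfolding B_def by (cases "x0 \<in> I") auto
    have pi': "poset_ideal P I'"
      unfolding poset_ideal_def I'_def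
    proof (intro conjI ballI impI)
      fix x y assume "x \<in> {x \<in> I. \<alpha> x < B}" "y \<in> P" "y \<le> x"
      then have yI: "y \<in> I" and xI: "x \<in> I" and ax: "\<alpha> x < B" using PI(2) by blast+
      have "\<alpha> y \<le> \<alpha> x" using aI(1) yI xI \<open>y \<le> x\<close> unfolding isotone_on_def by blast
      then show "y \<in> {x \<in> I. \<alpha> x < B}" using yI ax by simp
    qed (use PI in auto)
    have "x0 \<notin> I'" using x0 unfolding I'_def by auto
    then have sub: "I' \<subset> I" using x0I unfolding I'_def by blast
    have "marker P J I' (restr I' \<alpha>)"
      unfolding marker_def
    proof (intro conjI ballI impI)
      show "poset_ideal P I'" by (rule pi')
      show "restr I' \<alpha> \<in> Hom I'"
        using aI(1) unfolding Hom_def isotone_on_def restr_def I'_def by auto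
    next
      fix \<phi> assume \<phi>: "\<phi> \<in> Hom P" "restr I' \<phi> = restr I' \<alpha>"
      show "\<phi> \<in> J"
      proof (rule ccontr)
        assume "\<phi> \<notin> J"
        then obtain \<psi> where \<psi>: "\<psi> \<in> Hom P" "\<psi> \<notin> J" "\<psi> \<le> \<phi>" "\<forall>x. \<psi> x < B"
          using W \<phi>(1) by blast
        define Mx where "Mx = (\<Sum>x\<in>P. \<alpha> x)"
        have aM: "\<alpha> x \<le> Mx" for x
        proof (cases "x \<in> P")
          case True then show ?thesis unfolding Mx_def using assms(1) by (intro member_le_sum) auto
        next
          case False then have "x \<notin> I" using PI(1) by blast
          then show ?thesis using aI(2) by simp
        qed
        define \<chi> where "\<chi> = (\<lambda>y. if y \<in> I then \<alpha> y else if y \<in> P then \<psi> y + Mx else 0)"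
        have \<chi>H: "\<chi> \<in> Hom P"
          unfolding Hom_def isotone_on_def
        proof (intro CollectI conjI ballI impI allI)
          fix x y assume xy: "x \<in> P" "y \<in> P" "x \<le> y"
          show "\<chi> x \<le> \<chi> y"
          proof (cases "y \<in> I")
            case True
            then have "x \<in> I" using PI(2) xy by blast
            then show ?thesis using True xy aI(1) unfolding \<chi>_def isotone_on_def by auto
          next
            case False
            show ?thesis
            proof (cases "x \<in> I")
              case True then show ?thesis using False xy aM[of x] unfolding \<chi>_def by auto
            next
              case False' : False
              then show ?thesis using False xy HP(1)[OF \<psi>(1)] unfolding \<chi>_def isotone_on_def by auto
            qed
          qed
        next
          fix x assume "x \<notin> P" then show "\<chi> x = 0" using PI(1) unfolding \<chi>_def by auto
        qed
        have "restr I \<chi> = \<alpha>" using aI(2) unfolding restr_def \<chi>_def by auto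
        then have "\<chi> \<in> J" using ext \<chi>H by blast
        moreover have "\<psi> \<le> \<chi>"
        proof (rule le_funI)
          fix y
          show "\<psi> y \<le> \<chi> y"
          proof (cases "y \<in> I'")
            case True
            have "\<phi> y = \<alpha> y" using fun_cong[OF \<phi>(2), of y] True unfolding restr_def by auto
            then show ?thesis using True le_funD[OF \<psi>(3), of y] unfolding \<chi>_def I'_def by auto
          next
            case False
            show ?thesis
            proof (cases "y \<in> I")
              case True then show ?thesis using False \<psi>(4)[rule_format, of y] unfolding \<chi>_def I'_def by auto
            next
              case False2: False
              then show ?thesis using HP(2)[OF \<psi>(1), of y] unfolding \<chi>_def by auto
            qed
          qed
        qed
        ultimately have "\<psi> \<in> J" using J(2) \<psi>(1) by blast
        then show False using \<psi>(2) by blast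
      qed
    qed
    then show False using mn[OF pi' sub] by blast
  qed
  have "{(I, \<alpha>). minimal_marker P J I \<alpha>} \<subseteq> Pow P \<times> {f. \<forall>x. (x \<in> P \<longrightarrow> f x \<in> {..<B}) \<and> (x \<notin> P \<longrightarrow> f x = 0)}"
  proof clarify
    fix I \<alpha> assume mm: "minimal_marker P J I \<alpha>"
    then have "I \<subseteq> P" "\<And>x. x \<notin> I \<Longrightarrow> \<alpha> x = 0"
      by (auto simp: minimal_marker_def marker_def poset_ideal_def Hom_def)
    then show "I \<in> Pow P \<and> \<alpha> \<in> {f. \<forall>x. (x \<in> P \<longrightarrow> f x \<in> {..<B}) \<and> (x \<notin> P \<longrightarrow> f x = 0)}"
      using bound[OF mm] by auto
  qed
  moreover have "finite (Pow P \<times> {f. \<forall>x. (x \<in> P \<longrightarrow> f x \<in> {..<B}) \<and> (x \<notin> P \<longrightarrow> f x = 0)})"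
    using assms(1) finite_set_of_finite_funs[OF assms(1), of "{..<B}" 0] by auto
  ultimately show ?thesis by (rule finite_subset)
qed

end
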